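(* Let $1\le p_0<\infty$, $0<t_0<\infty$, and let $f,g\in L^{p_0}(0,\infty)$ satisfy $f^*(t_0)>g^*(t_0)$ and $f^*(t)\ge g^*(t)$ for all $0<t<t_0$. Suppose that the set $\mathcal P:=\{p>0:\ |f|^p-|g|^p\in L^1(0,\infty)\}$ is unbounded. Then there exists $P_1$ such that for all $p\in\mathcal P$ with $p\ge P_1$, \[ \int_0^\infty(|f(t)|^p-|g(t)|^p)\,dt>0 . \]
   Context: $f^*$ denotes the nonincreasing rearrangement of a measurable function $f$ on $(0,\infty)$ with Lebesgue measure: $f^*(s)=\inf\{\tau>0:|\{|f|>\tau\}|\le s\}$. *)

theory Defs
  imports "HOL-Analysis.Analysis"
begin

definition rearr :: "(real \<Rightarrow> real) \<Rightarrow> real \<Rightarrow> real" where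
  "rearr f s = Inf {\<tau>::real. \<tau> > 0 \<and>
      emeasure lebesgue {t \<in> {0<..}. \<tau> < \<bar>f t\<bar>} \<le> ennreal s}"

definition in_Lp :: "real \<Rightarrow> (real \<Rightarrow> real) \<Rightarrow> bool" where
  "in_Lp p f \<longleftrightarrow> set_borel_measurable lebesgue {0<..} f \<and>
      set_integrable lebesgue {0<..} (\<lambda>t. \<bar>f t\<bar> powr p)"

end

theory Submission
  imports Defs
begin


lemma sf_lebesgue: "sigma_finite_measure (lebesgue :: real measure)"
proof
  show "\<exists>A::real set set. countable A \<and> A \<subseteq> sets lebesgue \<and> \<Union>A = space lebesgue \<and> (\<forall>a\<in>A. emeasure lebesgue a \<noteq> \<infinity>)"
  proof (rule exI[of _ "range (\<lambda>n::nat. {-real n..real n})"], intro conjI)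
    show "countable (range (\<lambda>n::nat. {-real n..real n}))" by simp
    show "range (\<lambda>n::nat. {-real n..real n}) \<subseteq> sets lebesgue" by auto
    show "\<forall>a\<in>range (\<lambda>n::nat. {-real n..real n}). emeasure lebesgue a \<noteq> \<infinity>" by auto
    show "\<Union> (range (\<lambda>n::nat. {-real n..real n})) = space lebesgue"
    proof (auto)
      fix x :: real
      obtain n :: nat where "\<bar>x\<bar> \<le> real n" using real_arch_simple by blast
      then show "\<exists>n. - real n \<le> x \<and> x \<le> real n" by (intro exI[of _ n]) auto
    qed
  qed
qed

lemma layer_cake:
  fixes w :: "real \<Rightarrow> real"
  assumes wm: "w \<in> borel_measurable lebesgue" and w0: "\<And>x. w x \<ge> 0"
  shows "(\<integral>\<^sup>+x. ennreal (w x) \<partial>lebesgue) =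
    (\<integral>\<^sup>+s. indicator {0..} s * emeasure lebesgue {x. s < w x} \<partial>lborel)"
    and "(\<lambda>s. indicator {0..} s * emeasure lebesgue {x. s < w x}) \<in> borel_measurable lborel"
proof -
  interpret L: sigma_finite_measure "lebesgue :: real measure" by (rule sf_lebesgue)
  interpret P: pair_sigma_finite "lebesgue :: real measure" "lborel :: real measure"
    by (simp add: L.sigma_finite_measure_axioms lborel.sigma_finite_measure_axioms pair_sigma_finite.intro)
  have meas: "(\<lambda>(x,s). indicator {0..<w x} s :: ennreal) \<in> borel_measurable (lebesgue \<Otimes>\<^sub>M lborel)"
  proof -
    have "(\<lambda>(x,s). indicator {0..<w x} s :: ennreal) = (\<lambda>z. if 0 \<le> snd z \<and> snd z < w (fst z) then 1 else 0)"
      by (auto simp: fun_eq_iff indicator_def)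
    moreover have "(\<lambda>z. if 0 \<le> snd z \<and> snd z < w (fst z) then 1 else 0 :: ennreal) \<in> borel_measurable (lebesgue \<Otimes>\<^sub>M lborel)"
      using wm by measurable
    ultimately show ?thesis by simp
  qed
  have meas2: "(\<lambda>(s,x). indicator {0..<w x} s :: ennreal) \<in> borel_measurable (lborel \<Otimes>\<^sub>M lebesgue)"
  proof -
    have "(\<lambda>(s,x). indicator {0..<w x} s :: ennreal) = (\<lambda>z. if 0 \<le> fst z \<and> fst z < w (snd z) then 1 else 0)"
      by (auto simp: fun_eq_iff indicator_def)
    moreover have "(\<lambda>z. if 0 \<le> fst z \<and> fst z < w (snd z) then 1 else 0 :: ennreal) \<in> borel_measurable (lborel \<Otimes>\<^sub>M lebesgue)"
      using wm by measurable
    ultimately show ?thesis by simp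
  qed
  have eq: "(\<integral>\<^sup>+x. indicator {0..<w x} s \<partial>lebesgue) = indicator {0..} s * emeasure lebesgue {x. s < w x}" for s
  proof -
    have "{x\<in>space lebesgue. s < w x} \<in> sets lebesgue" using wm by measurable
    then have "{x. s < w x} \<in> sets lebesgue" by simp
    moreover have "(\<lambda>x. indicator {0..<w x} s :: ennreal) = (\<lambda>x. indicator {0..} s * indicator {x. s < w x} x)"
      by (auto simp: fun_eq_iff indicator_def)
    ultimately show ?thesis
      by (simp add: nn_integral_cmult)
  qed
  have "(\<lambda>s. \<integral>\<^sup>+x. indicator {0..<w x} s \<partial>lebesgue) \<in> borel_measurable lborel"
    using L.borel_measurable_nn_integral[of "\<lambda>s x. indicator {0..<w x} s" lborel] meas2 by simp
  then show "(\<lambda>s. indicator {0..} s * emeasure lebesgue {x. s < w x}) \<in> borel_measurable lborel"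
    using eq by simp
  have "(\<integral>\<^sup>+x. ennreal (w x) \<partial>lebesgue) = (\<integral>\<^sup>+x. (\<integral>\<^sup>+s. indicator {0..<w x} s \<partial>lborel) \<partial>lebesgue)"
    using w0 by (intro nn_integral_cong) simp
  also have "\<dots> = (\<integral>\<^sup>+s. (\<integral>\<^sup>+x. indicator {0..<w x} s \<partial>lebesgue) \<partial>lborel)"
    using P.Fubini'[of "\<lambda>x s. indicator {0..<w x} s"] meas by simp
  also have "\<dots> = (\<integral>\<^sup>+s. indicator {0..} s * emeasure lebesgue {x. s < w x} \<partial>lborel)"
    using eq by simp
  finally show "(\<integral>\<^sup>+x. ennreal (w x) \<partial>lebesgue) =
    (\<integral>\<^sup>+s. indicator {0..} s * emeasure lebesgue {x. s < w x} \<partial>lborel)" .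
qed

lemma powr_lt_iff:
  fixes s y p :: real
  assumes "0 \<le> s" "0 \<le> y" "0 < p"
  shows "s < y powr p \<longleftrightarrow> s powr (1/p) < y"
proof
  assume a: "s < y powr p"
  show "s powr (1/p) < y"
  proof (rule ccontr)
    assume "\<not> s powr (1/p) < y"
    then have "y \<le> s powr (1/p)" by simp
    then have "y powr p \<le> (s powr (1/p)) powr p" using assms by (intro powr_mono2) auto
    also have "\<dots> = s" using assms by (simp add: powr_powr)
    finally show False using a by simp
  qed
next
  assume a: "s powr (1/p) < y"
  have "s = (s powr (1/p)) powr p" using assms by (simp add: powr_powr)
  also have "\<dots> < y powr p" using assms a by (intro powr_less_mono2) auto
  finally show "s < y powr p" .
qed

lemma pw_bound:
  fixes y c p p0 :: real
  assumes "0 \<le> y" "y \<le> c" "0 < p0" "p0 \<le> p"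
  shows "y powr p \<le> c powr (p - p0) * y powr p0"
proof (cases "y = 0")
  case True then show ?thesis using assms by simp
next
  case False
  then have "y powr p = y powr (p - p0) * y powr p0" by (simp add: powr_add[symmetric])
  also have "\<dots> \<le> c powr (p - p0) * y powr p0"
    using assms False by (intro mult_right_mono powr_mono2) auto
  finally show ?thesis .
qed



lemma key_bound:
  fixes F G :: "real \<Rightarrow> real" and p p0 c1 c2 t0 \<epsilon> N :: real
  assumes Fm: "F \<in> borel_measurable lebesgue" and Gm: "G \<in> borel_measurable lebesgue"
    and F0: "\<And>x. F x \<ge> 0" and G0: "\<And>x. G x \<ge> 0"
    and FI: "integrable lebesgue (\<lambda>x. F x powr p0)" and GI: "integrable lebesgue (\<lambda>x. G x powr p0)"
    and p0: "0 < p0" and pp0: "p0 \<le> p"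
    and c1: "0 < c1" and c12: "c1 < c2"
    and comp: "\<And>\<tau>. c1 \<le> \<tau> \<Longrightarrow> emeasure lebesgue {x. \<tau> < G x} \<le> emeasure lebesgue {x. \<tau> < F x}"
    and finF: "emeasure lebesgue {x. c1 < F x} < \<infinity>"
    and finG: "emeasure lebesgue {x. c1 < G x} < \<infinity>"
    and Gc1: "emeasure lebesgue {x. c1 < G x} \<le> ennreal t0"
    and Fc2: "ennreal (t0 + \<epsilon>) \<le> emeasure lebesgue {x. c2 < F x}"
    and t0: "0 \<le> t0" and eps: "0 \<le> \<epsilon>"
    and N: "c2 powr p \<le> N"
  shows "integrable lebesgue (\<lambda>x. min (F x powr p) N)"
    and "integrable lebesgue (\<lambda>x. min (G x powr p) N)"
    and "\<epsilon> * c2 powr p - c1 powr (p - p0) * (\<integral>x. G x powr p0 \<partial>lebesgue)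
          \<le> (\<integral>x. min (F x powr p) N \<partial>lebesgue) - (\<integral>x. min (G x powr p) N \<partial>lebesgue)"
proof -
  have p: "0 < p" using p0 pp0 by simp
  have N0: "0 < N" using N c1 c12 by (smt (verit) powr_gt_zero)
  have setF: "{x. c1 < F x} \<in> sets lebesgue"
  proof -
    have "{x\<in>space lebesgue. c1 < F x} \<in> sets lebesgue" using Fm by measurable
    then show ?thesis by simp
  qed
  have setG: "{x. c1 < G x} \<in> sets lebesgue"
  proof -
    have "{x\<in>space lebesgue. c1 < G x} \<in> sets lebesgue" using Gm by measurable
    then show ?thesis by simp
  qed
  have intmin: "integrable lebesgue (\<lambda>x. min (H x powr p) N)"
    if Hm: "H \<in> borel_measurable lebesgue" and H0: "\<And>x. H x \<ge> 0"
      and HI: "integrable lebesgue (\<lambda>x. H x powr p0)"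
      and setH: "{x. c1 < H x} \<in> sets lebesgue" and finH: "emeasure lebesgue {x. c1 < H x} < \<infinity>"
    for H :: "real \<Rightarrow> real"
  proof (rule Bochner_Integration.integrable_bound)
    show "integrable lebesgue (\<lambda>x. c1 powr (p - p0) * H x powr p0 + N * indicator {x. c1 < H x} x)"
    proof (rule Bochner_Integration.integrable_add)
      show "integrable lebesgue (\<lambda>x. c1 powr (p - p0) * H x powr p0)"
        using HI by (rule integrable_mult_right)
      show "integrable lebesgue (\<lambda>x. N * indicator {x. c1 < H x} x)"
        using setH finH by (intro integrable_mult_right integrable_real_indicator) auto
    qed
    show "(\<lambda>x. min (H x powr p) N) \<in> borel_measurable lebesgue" using Hm by measurable
    show "AE x in lebesgue. norm (min (H x powr p) N) \<le> norm (c1 powr (p - p0) * H x powr p0 + N * indicator {x. c1 < H x} x)"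
    proof (intro AE_I2)
      fix x
      have a: "0 \<le> min (H x powr p) N" using N0 by simp
      have b: "0 \<le> c1 powr (p - p0) * H x powr p0" by simp
      have "min (H x powr p) N \<le> c1 powr (p - p0) * H x powr p0 + N * indicator {x. c1 < H x} x"
      proof (cases "c1 < H x")
        case True
        have "min (H x powr p) N \<le> N" by simp
        moreover have "c1 powr (p - p0) * H x powr p0 + N * indicator {x. c1 < H x} x = c1 powr (p - p0) * H x powr p0 + N"
          using True by simp
        ultimately show ?thesis using b by linarith
      next
        case False
        then have "H x powr p \<le> c1 powr (p - p0) * H x powr p0"
          using H0[of x] p0 pp0 by (intro pw_bound) auto
        then show ?thesis using False by (simp add: indicator_def)
      qed
      then show "norm (min (H x powr p) N) \<le> norm (c1 powr (p - p0) * H x powr p0 + N * indicator {x. c1 < H x} x)"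
        using a b N0 by (simp add: indicator_def)
    qed
  qed
  show iF: "integrable lebesgue (\<lambda>x. min (F x powr p) N)" using intmin Fm F0 FI setF finF by blast
  show iG: "integrable lebesgue (\<lambda>x. min (G x powr p) N)" using intmin Gm G0 GI setG finG by blast
  define BF where "BF x = (if c1 < F x then min (F x powr p) N else 0)" for x
  define AF where "AF x = (if c1 < F x then 0 else min (F x powr p) N)" for x
  define BG where "BG x = (if c1 < G x then min (G x powr p) N else 0)" for x
  define AG where "AG x = (if c1 < G x then 0 else min (G x powr p) N)" for x
  have mBF: "BF \<in> borel_measurable lebesgue" unfolding BF_def using Fm by measurable
  have mAF: "AF \<in> borel_measurable lebesgue" unfolding AF_def using Fm by measurable
  have mBG: "BG \<in> borel_measurable lebesgue" unfolding BG_def using Gm by measurable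
  have mAG: "AG \<in> borel_measurable lebesgue" unfolding AG_def using Gm by measurable
  have BF0: "BF x \<ge> 0" for x unfolding BF_def using N0 by simp
  have BG0: "BG x \<ge> 0" for x unfolding BG_def using N0 by simp
  have AF0: "AF x \<ge> 0" for x unfolding AF_def using N0 by simp
  have AG0: "AG x \<ge> 0" for x unfolding AG_def using N0 by simp
  have splitF: "(\<integral>\<^sup>+x. ennreal (min (F x powr p) N) \<partial>lebesgue) = (\<integral>\<^sup>+x. ennreal (AF x) \<partial>lebesgue) + (\<integral>\<^sup>+x. ennreal (BF x) \<partial>lebesgue)"
  proof -
    have "(\<integral>\<^sup>+x. ennreal (min (F x powr p) N) \<partial>lebesgue) = (\<integral>\<^sup>+x. ennreal (AF x) + ennreal (BF x) \<partial>lebesgue)"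
      using AF0 BF0 by (intro nn_integral_cong) (simp add: AF_def BF_def)
    also have "\<dots> = (\<integral>\<^sup>+x. ennreal (AF x) \<partial>lebesgue) + (\<integral>\<^sup>+x. ennreal (BF x) \<partial>lebesgue)"
      using mAF mBF by (intro nn_integral_add) auto
    finally show ?thesis .
  qed
  have splitG: "(\<integral>\<^sup>+x. ennreal (min (G x powr p) N) \<partial>lebesgue) = (\<integral>\<^sup>+x. ennreal (AG x) \<partial>lebesgue) + (\<integral>\<^sup>+x. ennreal (BG x) \<partial>lebesgue)"
  proof -
    have "(\<integral>\<^sup>+x. ennreal (min (G x powr p) N) \<partial>lebesgue) = (\<integral>\<^sup>+x. ennreal (AG x) + ennreal (BG x) \<partial>lebesgue)"
      using AG0 BG0 by (intro nn_integral_cong) (simp add: AG_def BG_def)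
    also have "\<dots> = (\<integral>\<^sup>+x. ennreal (AG x) \<partial>lebesgue) + (\<integral>\<^sup>+x. ennreal (BG x) \<partial>lebesgue)"
      using mAG mBG by (intro nn_integral_add) auto
    finally show ?thesis .
  qed
  define KG where "KG = (\<integral>x. G x powr p0 \<partial>lebesgue)"
  have KG0: "0 \<le> KG" unfolding KG_def by simp
  have AGb: "(\<integral>\<^sup>+x. ennreal (AG x) \<partial>lebesgue) \<le> ennreal (c1 powr (p - p0) * KG)"
  proof -
    have "(\<integral>\<^sup>+x. ennreal (AG x) \<partial>lebesgue) \<le> (\<integral>\<^sup>+x. ennreal (c1 powr (p - p0) * G x powr p0) \<partial>lebesgue)"
    proof (intro nn_integral_mono ennreal_leI)
      fix x
      show "AG x \<le> c1 powr (p - p0) * G x powr p0"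
      proof (cases "c1 < G x")
        case True then show ?thesis by (simp add: AG_def)
      next
        case False
        then have "G x powr p \<le> c1 powr (p - p0) * G x powr p0"
          using G0[of x] p0 pp0 by (intro pw_bound) auto
        then show ?thesis using False by (simp add: AG_def)
      qed
    qed
    also have "\<dots> = ennreal (c1 powr (p - p0) * KG)"
      unfolding KG_def using GI by (subst nn_integral_eq_integral) auto
    finally show ?thesis .
  qed
  have distB: "{x. s < BH x} = {x. max c1 (s powr (1/p)) < H x}"
    if "0 \<le> s" "s < N" "\<And>x. H x \<ge> 0" "BH = (\<lambda>x. if c1 < H x then min (H x powr p) N else 0)"
    for s and H BH :: "real \<Rightarrow> real"
  proof -
    have "s < BH x \<longleftrightarrow> max c1 (s powr (1/p)) < H x" for x
      using that powr_lt_iff[of s "H x" p] p by auto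
    then show ?thesis by auto
  qed
  have distB0: "{x. s < BH x} = {}"
    if "N \<le> s" "BH = (\<lambda>x. if c1 < H x then min (H x powr p) N else 0)"
    for s and H BH :: "real \<Rightarrow> real"
    using that N0 by auto
  have pt: "indicator {0..} s * emeasure lebesgue {x. s < BG x} + ennreal \<epsilon> * indicator {0..<c2 powr p} s
      \<le> indicator {0..} s * emeasure lebesgue {x. s < BF x}" for s
  proof (cases "0 \<le> s")
    case False then show ?thesis by simp
  next
    case s0: True
    show ?thesis
    proof (cases "s < N")
      case False
      then have "c2 powr p \<le> s" using N by simp
      have e1: "{x. s < BG x} = {}" using distB0[of s BG G] False by (auto simp: BG_def[abs_def])
      have e2: "{x. s < BF x} = {}" using distB0[of s BF F] False by (auto simp: BF_def[abs_def])
      show ?thesis using e1 e2 \<open>c2 powr p \<le> s\<close> by simp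
    next
      case sN: True
      define m where "m = max c1 (s powr (1/p))"
      have eF: "{x. s < BF x} = {x. m < F x}" unfolding m_def
        using distB[of s F BF] s0 sN F0 by (simp add: BF_def[abs_def])
      have eG: "{x. s < BG x} = {x. m < G x}" unfolding m_def
        using distB[of s G BG] s0 sN G0 by (simp add: BG_def[abs_def])
      have cmp: "emeasure lebesgue {x. m < G x} \<le> emeasure lebesgue {x. m < F x}"
        by (rule comp) (simp add: m_def)
      show ?thesis
      proof (cases "s < c2 powr p")
        case False then show ?thesis using s0 eF eG cmp by simp
      next
        case True
        then have "s powr (1/p) < c2" using powr_lt_iff[of s c2 p] s0 c1 c12 p by simp
        then have mc2: "m < c2" using c12 unfolding m_def by simp
        have "{x. c2 < F x} \<subseteq> {x. m < F x}" using mc2 by auto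
        then have "emeasure lebesgue {x. c2 < F x} \<le> emeasure lebesgue {x. m < F x}"
        proof (rule emeasure_mono)
          have "{x\<in>space lebesgue. m < F x} \<in> sets lebesgue" using Fm by measurable
          then show "{x. m < F x} \<in> sets lebesgue" by simp
        qed
        moreover have "ennreal t0 + ennreal \<epsilon> = ennreal (t0 + \<epsilon>)"
          using t0 eps by (rule ennreal_plus[symmetric])
        ultimately have F1: "ennreal t0 + ennreal \<epsilon> \<le> emeasure lebesgue {x. m < F x}"
          using Fc2 by (metis order_trans)
        have "{x. m < G x} \<subseteq> {x. c1 < G x}" unfolding m_def by auto
        then have "emeasure lebesgue {x. m < G x} \<le> emeasure lebesgue {x. c1 < G x}"
          using setG by (rule emeasure_mono)
        then have G1: "emeasure lebesgue {x. m < G x} \<le> ennreal t0" using Gc1 by simp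
        have "emeasure lebesgue {x. m < G x} + ennreal \<epsilon> \<le> emeasure lebesgue {x. m < F x}"
          using F1 G1 by (meson add_right_mono order_trans)
        then show ?thesis using s0 True eF eG by simp
      qed
    qed
  qed
  have lcF: "(\<integral>\<^sup>+x. ennreal (BF x) \<partial>lebesgue) = (\<integral>\<^sup>+s. indicator {0..} s * emeasure lebesgue {x. s < BF x} \<partial>lborel)"
    and mF: "(\<lambda>s. indicator {0..} s * emeasure lebesgue {x. s < BF x}) \<in> borel_measurable lborel"
    using layer_cake[OF mBF BF0] by auto
  have lcG: "(\<integral>\<^sup>+x. ennreal (BG x) \<partial>lebesgue) = (\<integral>\<^sup>+s. indicator {0..} s * emeasure lebesgue {x. s < BG x} \<partial>lborel)"
    and mG: "(\<lambda>s. indicator {0..} s * emeasure lebesgue {x. s < BG x}) \<in> borel_measurable lborel"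
    using layer_cake[OF mBG BG0] by auto
  have BB: "(\<integral>\<^sup>+x. ennreal (BG x) \<partial>lebesgue) + ennreal (\<epsilon> * c2 powr p) \<le> (\<integral>\<^sup>+x. ennreal (BF x) \<partial>lebesgue)"
  proof -
    have "(\<integral>\<^sup>+x. ennreal (BG x) \<partial>lebesgue) + ennreal (\<epsilon> * c2 powr p)
       = (\<integral>\<^sup>+s. indicator {0..} s * emeasure lebesgue {x. s < BG x} \<partial>lborel) + (\<integral>\<^sup>+s. ennreal \<epsilon> * indicator {0..<c2 powr p} s \<partial>lborel)"
      using eps by (simp add: lcG nn_integral_cmult ennreal_mult)
    also have "\<dots> = (\<integral>\<^sup>+s. indicator {0..} s * emeasure lebesgue {x. s < BG x} + ennreal \<epsilon> * indicator {0..<c2 powr p} s \<partial>lborel)"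
      using mG by (intro nn_integral_add[symmetric]) auto
    also have "\<dots> \<le> (\<integral>\<^sup>+s. indicator {0..} s * emeasure lebesgue {x. s < BF x} \<partial>lborel)"
      by (intro nn_integral_mono pt)
    finally show ?thesis using lcF by simp
  qed
  have IF: "(\<integral>\<^sup>+x. ennreal (min (F x powr p) N) \<partial>lebesgue) = ennreal (\<integral>x. min (F x powr p) N \<partial>lebesgue)"
    using iF N0 by (intro nn_integral_eq_integral) auto
  have IG: "(\<integral>\<^sup>+x. ennreal (min (G x powr p) N) \<partial>lebesgue) = ennreal (\<integral>x. min (G x powr p) N \<partial>lebesgue)"
    using iG N0 by (intro nn_integral_eq_integral) auto
  have IF0: "0 \<le> (\<integral>x. min (F x powr p) N \<partial>lebesgue)" using N0 by (intro integral_nonneg_AE) auto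
  have IG0: "0 \<le> (\<integral>x. min (G x powr p) N \<partial>lebesgue)" using N0 by (intro integral_nonneg_AE) auto
  have "ennreal ((\<integral>x. min (G x powr p) N \<partial>lebesgue) + \<epsilon> * c2 powr p)
      = (\<integral>\<^sup>+x. ennreal (AG x) \<partial>lebesgue) + ((\<integral>\<^sup>+x. ennreal (BG x) \<partial>lebesgue) + ennreal (\<epsilon> * c2 powr p))"
    using IG splitG IG0 eps by (simp add: ennreal_plus add.assoc)
  also have "\<dots> \<le> ennreal (c1 powr (p - p0) * KG) + (\<integral>\<^sup>+x. ennreal (BF x) \<partial>lebesgue)"
    by (intro add_mono AGb BB)
  also have "\<dots> \<le> ennreal (c1 powr (p - p0) * KG) + ((\<integral>\<^sup>+x. ennreal (AF x) \<partial>lebesgue) + (\<integral>\<^sup>+x. ennreal (BF x) \<partial>lebesgue))"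
    by (intro add_left_mono) simp
  also have "\<dots> = ennreal (c1 powr (p - p0) * KG + (\<integral>x. min (F x powr p) N \<partial>lebesgue))"
    using IF splitF IF0 KG0 by (simp add: ennreal_plus)
  finally have "(\<integral>x. min (G x powr p) N \<partial>lebesgue) + \<epsilon> * c2 powr p \<le> c1 powr (p - p0) * KG + (\<integral>x. min (F x powr p) N \<partial>lebesgue)"
    using IF0 KG0 by (subst (asm) ennreal_le_iff) auto
  then show "\<epsilon> * c2 powr p - c1 powr (p - p0) * (\<integral>x. G x powr p0 \<partial>lebesgue)
          \<le> (\<integral>x. min (F x powr p) N \<partial>lebesgue) - (\<integral>x. min (G x powr p) N \<partial>lebesgue)"
    unfolding KG_def by linarith
qed


lemma sets_ge_aux: "(u::'a \<Rightarrow> real) \<in> borel_measurable M \<Longrightarrow> {x\<in>space M. c \<le> u x} \<in> sets M"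
  by measurable

definition lev :: "(real \<Rightarrow> real) \<Rightarrow> real \<Rightarrow> real set" where
  "lev h \<tau> = {t \<in> {0<..}. \<tau> < \<bar>h t\<bar>}"

lemma rearr_lev: "rearr h s = Inf {\<tau>. \<tau> > 0 \<and> emeasure lebesgue (lev h \<tau>) \<le> ennreal s}"
  unfolding rearr_def lev_def by simp

lemma lev_sets:
  assumes "in_Lp q h" shows "lev h \<tau> \<in> sets lebesgue"
proof -
  have m: "(\<lambda>x. indicator {0<..} x *\<^sub>R h x) \<in> borel_measurable lebesgue"
    using assms unfolding in_Lp_def set_borel_measurable_def by simp
  have "{x \<in> space lebesgue. \<tau> < \<bar>indicator {0<..} x *\<^sub>R h x\<bar>} \<in> sets lebesgue"
    using m by measurable
  moreover have "{0<..} \<in> sets (lebesgue :: real measure)" by simp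
  ultimately have "{0<..} \<inter> {x \<in> space lebesgue. \<tau> < \<bar>indicator {0<..} x *\<^sub>R h x\<bar>} \<in> sets lebesgue"
    by blast
  moreover have "{0<..} \<inter> {x \<in> space lebesgue. \<tau> < \<bar>indicator {0<..} x *\<^sub>R h x\<bar>} = lev h \<tau>"
    unfolding lev_def by (auto simp: indicator_def)
  ultimately show ?thesis by simp
qed

lemma lev_mono: "\<tau> \<le> \<sigma> \<Longrightarrow> lev h \<sigma> \<subseteq> lev h \<tau>"
  unfolding lev_def by auto

lemma lev_emono: "in_Lp q h \<Longrightarrow> \<tau> \<le> \<sigma> \<Longrightarrow> emeasure lebesgue (lev h \<sigma>) \<le> emeasure lebesgue (lev h \<tau>)"
  by (intro emeasure_mono lev_mono lev_sets)

lemma lev_markov: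
  assumes "in_Lp q h" "q > 0" "\<tau> > 0"
  shows "emeasure lebesgue (lev h \<tau>) \<le> ennreal ((LINT t:{0<..}|lebesgue. \<bar>h t\<bar> powr q) / \<tau> powr q)"
proof -
  let ?u = "\<lambda>t. indicator {0<..} t *\<^sub>R \<bar>h t\<bar> powr q"
  have int: "integrable lebesgue ?u"
    using assms unfolding in_Lp_def set_integrable_def by simp
  have c: "\<tau> powr q > 0" using assms by simp
  have sub: "lev h \<tau> \<subseteq> {x\<in>space lebesgue. ?u x \<ge> \<tau> powr q}"
  proof
    fix x assume "x \<in> lev h \<tau>"
    then have "x > 0" "\<tau> < \<bar>h x\<bar>" unfolding lev_def by auto
    then show "x \<in> {x\<in>space lebesgue. ?u x \<ge> \<tau> powr q}"
      using assms by (auto intro!: powr_mono2)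
  qed
  have "emeasure lebesgue (lev h \<tau>) \<le> emeasure lebesgue {x\<in>space lebesgue. ?u x \<ge> \<tau> powr q}"
  proof (rule emeasure_mono[OF sub])
    have um: "?u \<in> borel_measurable lebesgue" using int by (rule borel_measurable_integrable)
    then show "{x\<in>space lebesgue. ?u x \<ge> \<tau> powr q} \<in> sets lebesgue" by (rule sets_ge_aux)
  qed
  also have "\<dots> \<le> ennreal ((1 / \<tau> powr q) * (\<integral>x. ?u x \<partial>lebesgue))"
    by (rule integral_Markov_inequality) (use int c in auto)
  finally show ?thesis unfolding set_lebesgue_integral_def by simp
qed

lemma lev_finite:
  assumes "in_Lp q h" "q > 0" "\<tau> > 0"
  shows "emeasure lebesgue (lev h \<tau>) < \<infinity>"
  using lev_markov[OF assms] by (simp add: le_less_trans)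

lemma lev_small:
  assumes "in_Lp q h" "q \<ge> 1" "s > 0"
  shows "\<exists>\<tau>>0. emeasure lebesgue (lev h \<tau>) \<le> ennreal s"
proof -
  define K where "K = (LINT t:{0<..}|lebesgue. \<bar>h t\<bar> powr q)"
  have K0: "K \<ge> 0" unfolding K_def set_lebesgue_integral_def
    by (intro integral_nonneg_AE) (auto simp: indicator_def)
  define \<tau> where "\<tau> = K / s + 1"
  have t1: "\<tau> \<ge> 1" using K0 assms unfolding \<tau>_def by simp
  have "\<tau> \<le> \<tau> powr q"
  proof -
    have "\<tau> powr 1 \<le> \<tau> powr q" using t1 assms by (intro powr_mono) auto
    then show ?thesis using t1 by simp
  qed
  then have "K / s < \<tau> powr q" unfolding \<tau>_def by linarith
  then have "K / \<tau> powr q \<le> s"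
    using assms t1 K0 by (simp add: field_simps)
  then have "emeasure lebesgue (lev h \<tau>) \<le> ennreal s"
  proof -
    have "emeasure lebesgue (lev h \<tau>) \<le> ennreal (K / \<tau> powr q)"
      unfolding K_def using assms t1 by (intro lev_markov) auto
    also have "\<dots> \<le> ennreal s" by (rule ennreal_leI) fact
    finally show ?thesis .
  qed
  then show ?thesis using t1 by (intro exI[of _ \<tau>]) auto
qed

lemma rearr_le:
  assumes "\<tau> > 0" "emeasure lebesgue (lev h \<tau>) \<le> ennreal s"
  shows "rearr h s \<le> \<tau>"
  unfolding rearr_lev
  by (rule cInf_lower) (use assms in \<open>auto intro!: bdd_belowI[of _ 0]\<close>)

lemma rearr_ge:
  assumes "in_Lp q h" "q \<ge> 1" "s > 0"
    and "\<And>\<rho>. \<rho> > 0 \<Longrightarrow> emeasure lebesgue (lev h \<rho>) \<le> ennreal s \<Longrightarrow> \<sigma> \<le> \<rho>"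
  shows "\<sigma> \<le> rearr h s"
  unfolding rearr_lev
  by (rule cInf_greatest) (use assms lev_small[OF assms(1-3)] in auto)

lemma lev_cont:
  assumes "in_Lp q h" "\<tau> \<ge> 0" "m < emeasure lebesgue (lev h \<tau>)"
  shows "\<exists>\<sigma>>\<tau>. m < emeasure lebesgue (lev h \<sigma>)"
proof -
  define A where "A i = lev h (\<tau> + 1 / Suc i)" for i :: nat
  have rA: "range A \<subseteq> sets lebesgue" unfolding A_def using lev_sets[OF assms(1)] by auto
  have inc: "incseq A" unfolding A_def
    by (intro monoI lev_mono) (auto simp: frac_le)
  have U: "(\<Union>i. A i) = lev h \<tau>"
  proof
    show "(\<Union>i. A i) \<subseteq> lev h \<tau>" unfolding A_def using lev_mono
      by (metis (no_types, lifting) UN_least less_add_same_cancel1 less_eq_real_def of_nat_0_less_iff zero_less_Suc zero_less_divide_1_iff)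
    show "lev h \<tau> \<subseteq> (\<Union>i. A i)"
    proof
      fix x assume x: "x \<in> lev h \<tau>"
      then have "\<bar>h x\<bar> - \<tau> > 0" unfolding lev_def by auto
      then obtain n :: nat where "1 / Suc n < \<bar>h x\<bar> - \<tau>"
        using nat_approx_posE by blast
      then have "x \<in> A n" using x unfolding A_def lev_def by auto
      then show "x \<in> (\<Union>i. A i)" by blast
    qed
  qed
  have "(SUP i. emeasure lebesgue (A i)) = emeasure lebesgue (\<Union>i. A i)"
    by (rule SUP_emeasure_incseq[OF rA inc])
  with assms(3) U have "m < (SUP i. emeasure lebesgue (A i))" by simp
  then obtain i where "m < emeasure lebesgue (A i)" by (auto simp: less_SUP_iff)
  then show ?thesis unfolding A_def by (intro exI[of _ "\<tau> + 1 / Suc i"]) auto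
qed

lemma dist_compare:
  assumes fL: "in_Lp q f" and gL: "in_Lp q g" and q: "1 \<le> q"
    and hyp: "\<And>t. 0 < t \<Longrightarrow> t < t0 \<Longrightarrow> rearr f t \<ge> rearr g t"
    and \<tau>: "\<tau> > 0" and Dg: "emeasure lebesgue (lev g \<tau>) \<le> ennreal t0"
  shows "emeasure lebesgue (lev g \<tau>) \<le> emeasure lebesgue (lev f \<tau>)"
proof (rule ccontr)
  assume "\<not> ?thesis"
  then have lt: "emeasure lebesgue (lev f \<tau>) < emeasure lebesgue (lev g \<tau>)" by simp
  have q0: "q > 0" using q by simp
  have ef: "emeasure lebesgue (lev f \<tau>) = ennreal (measure lebesgue (lev f \<tau>))"
    using lev_finite[OF fL q0 \<tau>] by (intro emeasure_eq_ennreal_measure) auto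
  have eg: "emeasure lebesgue (lev g \<tau>) = ennreal (measure lebesgue (lev g \<tau>))"
    using lev_finite[OF gL q0 \<tau>] by (intro emeasure_eq_ennreal_measure) auto
  define mf where "mf = measure lebesgue (lev f \<tau>)"
  define mg where "mg = measure lebesgue (lev g \<tau>)"
  have mf0: "0 \<le> mf" unfolding mf_def by simp
  have mfg: "mf < mg" using lt ef eg unfolding mf_def mg_def
    by (metis ennreal_less_iff measure_nonneg)
  have mgt0: "mg \<le> t0"
  proof -
    have "ennreal mg \<le> ennreal t0" using Dg eg unfolding mg_def by simp
    moreover have "0 < mg" using mf0 mfg by simp
    ultimately show ?thesis by (simp add: ennreal_le_iff2)
  qed
  define t where "t = (mf + mg) / 2"
  have t0': "0 < t" "t < t0" "mf \<le> t" "t < mg" using mf0 mfg mgt0 unfolding t_def by auto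
  have "ennreal t < emeasure lebesgue (lev g \<tau>)" using eg t0' unfolding mg_def
    by (simp add: ennreal_lessI)
  then obtain \<sigma> where \<sigma>: "\<sigma> > \<tau>" "ennreal t < emeasure lebesgue (lev g \<sigma>)"
    using lev_cont[OF gL, of \<tau> "ennreal t"] \<tau> by auto
  have "rearr f t \<le> \<tau>"
    by (rule rearr_le) (use \<tau> ef t0' in \<open>auto simp: mf_def intro: ennreal_leI\<close>)
  moreover have "\<sigma> \<le> rearr g t"
  proof (rule rearr_ge[OF gL q \<open>0 < t\<close>])
    fix \<rho> assume \<rho>: "\<rho> > 0" "emeasure lebesgue (lev g \<rho>) \<le> ennreal t"
    show "\<sigma> \<le> \<rho>"
    proof (rule ccontr)
      assume "\<not> \<sigma> \<le> \<rho>"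
      then have "emeasure lebesgue (lev g \<sigma>) \<le> emeasure lebesgue (lev g \<rho>)"
        by (intro lev_emono[OF gL]) simp
      then show False using \<rho> \<sigma> by simp
    qed
  qed
  moreover have "rearr g t \<le> rearr f t" using hyp t0' by simp
  ultimately show False using \<sigma> by simp
qed



theorem mainTheorem18:
  fixes f g :: "real \<Rightarrow> real" and p0 t0 :: real
  assumes "1 \<le> p0" and "0 < t0"
    and "in_Lp p0 f" and "in_Lp p0 g"
    and "rearr f t0 > rearr g t0"
    and "\<And>t. 0 < t \<Longrightarrow> t < t0 \<Longrightarrow> rearr f t \<ge> rearr g t"
    and "\<not> bdd_above {p::real. p > 0 \<and>
            set_integrable lebesgue {0<..} (\<lambda>t. \<bar>f t\<bar> powr p - \<bar>g t\<bar> powr p)}"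
  shows "\<exists>P1. \<forall>p. (p > 0 \<and>
            set_integrable lebesgue {0<..} (\<lambda>t. \<bar>f t\<bar> powr p - \<bar>g t\<bar> powr p)
            \<and> p \<ge> P1) \<longrightarrow>
          (LINT t:{0<..}|lebesgue. \<bar>f t\<bar> powr p - \<bar>g t\<bar> powr p) > 0"
proof -
  note q1 = assms(1) and t0pos = assms(2) and fL = assms(3) and gL = assms(4)
  have q0: "0 < p0" using q1 by simp
  define Sf where "Sf = {\<tau>. \<tau> > 0 \<and> emeasure lebesgue (lev f \<tau>) \<le> ennreal t0}"
  define Sg where "Sg = {\<tau>. \<tau> > 0 \<and> emeasure lebesgue (lev g \<tau>) \<le> ennreal t0}"
  have ne: "Sg \<noteq> {}" using lev_small[OF gL q1 t0pos] unfolding Sg_def by auto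
  have ab: "Inf Sg < Inf Sf" using assms(5) unfolding rearr_lev Sf_def Sg_def .
  obtain c1 where c1Sg: "c1 \<in> Sg" and c1a: "c1 < Inf Sf" using cInf_lessD[OF ne ab] by blast
  have c1: "0 < c1" and Dgc1: "emeasure lebesgue (lev g c1) \<le> ennreal t0"
    using c1Sg unfolding Sg_def by auto
  define c2 where "c2 = (c1 + Inf Sf) / 2"
  have c12: "c1 < c2" and c2a: "c2 < Inf Sf" using c1a unfolding c2_def by auto
  have c2pos: "0 < c2" using c1 c12 by simp
  have Dfc2: "\<not> emeasure lebesgue (lev f c2) \<le> ennreal t0"
  proof
    assume "emeasure lebesgue (lev f c2) \<le> ennreal t0"
    then have "c2 \<in> Sf" using c2pos unfolding Sf_def by simp
    then have "Inf Sf \<le> c2" by (intro cInf_lower) (auto simp: Sf_def intro!: bdd_belowI[of _ 0])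
    then show False using c2a by simp
  qed
  have ef2: "emeasure lebesgue (lev f c2) = ennreal (measure lebesgue (lev f c2))"
    using lev_finite[OF fL q0 c2pos] by (intro emeasure_eq_ennreal_measure) auto
  define \<epsilon> where "\<epsilon> = measure lebesgue (lev f c2) - t0"
  have eps: "0 < \<epsilon>"
  proof -
    have "\<not> measure lebesgue (lev f c2) \<le> t0" using Dfc2 ef2 by (metis ennreal_leI)
    then show ?thesis unfolding \<epsilon>_def by simp
  qed
  have Fc2': "ennreal (t0 + \<epsilon>) = emeasure lebesgue (lev f c2)" using ef2 unfolding \<epsilon>_def by simp
  have comp: "emeasure lebesgue (lev g \<tau>) \<le> emeasure lebesgue (lev f \<tau>)" if "c1 \<le> \<tau>" for \<tau>
  proof (rule dist_compare[OF fL gL q1 assms(6)])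
    show "\<tau> > 0" using that c1 by simp
    have "emeasure lebesgue (lev g \<tau>) \<le> emeasure lebesgue (lev g c1)" by (rule lev_emono[OF gL that])
    then show "emeasure lebesgue (lev g \<tau>) \<le> ennreal t0" using Dgc1 by simp
  qed
  define F where "F x = \<bar>indicator {0<..} x *\<^sub>R f x\<bar>" for x
  define G where "G x = \<bar>indicator {0<..} x *\<^sub>R g x\<bar>" for x
  have Fm: "F \<in> borel_measurable lebesgue"
  proof -
    have hm: "(\<lambda>x. indicator {0<..} x *\<^sub>R f x) \<in> borel_measurable lebesgue"
      using fL unfolding in_Lp_def set_borel_measurable_def by simp
    show ?thesis unfolding F_def[abs_def] by (rule borel_measurable_abs[OF hm])
  qed
  have Gm: "G \<in> borel_measurable lebesgue"
  proof -
    have hm: "(\<lambda>x. indicator {0<..} x *\<^sub>R g x) \<in> borel_measurable lebesgue"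
      using gL unfolding in_Lp_def set_borel_measurable_def by simp
    show ?thesis unfolding G_def[abs_def] by (rule borel_measurable_abs[OF hm])
  qed
  have F0: "F x \<ge> 0" for x unfolding F_def by simp
  have G0: "G x \<ge> 0" for x unfolding G_def by simp
  have Flev: "{x. \<tau> < F x} = lev f \<tau>" if "0 \<le> \<tau>" for \<tau>
    using that unfolding F_def lev_def by (auto simp: indicator_def)
  have Glev: "{x. \<tau> < G x} = lev g \<tau>" if "0 \<le> \<tau>" for \<tau>
    using that unfolding G_def lev_def by (auto simp: indicator_def)
  have Fp: "(\<lambda>x. F x powr p) = (\<lambda>x. indicator {0<..} x *\<^sub>R \<bar>f x\<bar> powr p)" for p
    unfolding F_def by (auto simp: fun_eq_iff indicator_def)
  have Gp: "(\<lambda>x. G x powr p) = (\<lambda>x. indicator {0<..} x *\<^sub>R \<bar>g x\<bar> powr p)" for p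
    unfolding G_def by (auto simp: fun_eq_iff indicator_def)
  have FI: "integrable lebesgue (\<lambda>x. F x powr p0)"
    using fL unfolding in_Lp_def set_integrable_def Fp by simp
  have GI: "integrable lebesgue (\<lambda>x. G x powr p0)"
    using gL unfolding in_Lp_def set_integrable_def Gp by simp
  have diffeq: "(\<lambda>t. indicator {0<..} t *\<^sub>R (\<bar>f t\<bar> powr p - \<bar>g t\<bar> powr p)) = (\<lambda>x. F x powr p - G x powr p)" for p
    unfolding F_def G_def by (auto simp: fun_eq_iff indicator_def)
  define KG where "KG = (\<integral>x. G x powr p0 \<partial>lebesgue)"
  have KG0: "0 \<le> KG" unfolding KG_def by simp
  have h1: "emeasure lebesgue {x. \<tau> < G x} \<le> emeasure lebesgue {x. \<tau> < F x}" if "c1 \<le> \<tau>" for \<tau>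
    using comp[OF that] Flev Glev that c1 by simp
  have h2: "emeasure lebesgue {x. c1 < F x} < \<infinity>" using lev_finite[OF fL q0 c1] Flev c1 by simp
  have h3: "emeasure lebesgue {x. c1 < G x} < \<infinity>" using lev_finite[OF gL q0 c1] Glev c1 by simp
  have h4: "emeasure lebesgue {x. c1 < G x} \<le> ennreal t0" using Dgc1 Glev c1 by simp
  have h5: "ennreal (t0 + \<epsilon>) \<le> emeasure lebesgue {x. c2 < F x}" using Fc2' Flev c2pos by simp
  have h6: "0 \<le> t0" using t0pos by simp
  have h7: "0 \<le> \<epsilon>" using eps by simp
  note KB = key_bound[OF Fm Gm F0 G0 FI GI q0 _ c1 c12 h1 h2 h3 h4 h5 h6 h7]
  have kb: "\<epsilon> * c2 powr p - c1 powr (p - p0) * KG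
          \<le> (\<integral>x. min (F x powr p) N \<partial>lebesgue) - (\<integral>x. min (G x powr p) N \<partial>lebesgue)"
    if "p0 \<le> p" "c2 powr p \<le> N" for p N
    unfolding KG_def by (rule KB(3)[OF that(1) _ that(2)]) simp
  define r where "r = c2 / c1"
  define L where "L = ln r"
  define Q where "Q = KG / (\<epsilon> * c1 powr p0)"
  have r1: "1 < r" using c1 c12 unfolding r_def by simp
  have L0: "0 < L" using r1 unfolding L_def by simp
  have pos: "\<epsilon> * c2 powr p - c1 powr (p - p0) * KG > 0" if "p0 \<le> p" "Q / L \<le> p" for p
  proof -
    have "Q \<le> p * L" using that L0 by (simp add: field_simps)
    also have "\<dots> < exp (p * L)" using exp_ge_add_one_self[of "p * L"] by linarith
    also have "exp (p * L) = r powr p" unfolding L_def powr_def using r1 by (simp add: mult.commute)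
    finally have rQ: "Q < r powr p" .
    have c2e: "c2 powr p = r powr p * c1 powr p" unfolding r_def using c1 c2pos
      by (simp add: powr_divide)
    have c1e: "c1 powr (p - p0) = c1 powr p / c1 powr p0" by (simp add: powr_diff)
    define A where "A = c1 powr p"
    define B where "B = c1 powr p0"
    define R where "R = r powr p"
    have A0: "A > 0" and B0: "B > 0" unfolding A_def B_def using c1 by auto
    have "KG < R * (\<epsilon> * B)" using rQ eps B0 unfolding Q_def R_def B_def by (simp add: field_simps)
    then have "KG * (A / B) < R * (\<epsilon> * B) * (A / B)" using A0 B0 by (intro mult_strict_right_mono) auto
    also have "\<dots> = \<epsilon> * (R * A)" using B0 by (simp add: field_simps)
    finally show ?thesis using c2e c1e unfolding A_def B_def R_def by (simp add: mult.commute)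
  qed
  show ?thesis
  proof (intro exI[of _ "max p0 (Q / L)"] allI impI)
    fix p assume "p > 0 \<and> set_integrable lebesgue {0<..} (\<lambda>t. \<bar>f t\<bar> powr p - \<bar>g t\<bar> powr p) \<and> max p0 (Q / L) \<le> p"
    then have p: "p > 0" and si: "set_integrable lebesgue {0<..} (\<lambda>t. \<bar>f t\<bar> powr p - \<bar>g t\<bar> powr p)"
      and pP: "p0 \<le> p" "Q / L \<le> p" by auto
    have idiff: "integrable lebesgue (\<lambda>x. F x powr p - G x powr p)"
      using si unfolding set_integrable_def diffeq .
    have lim: "(\<lambda>n. \<integral>x. min (F x powr p) (real n) - min (G x powr p) (real n) \<partial>lebesgue)
        \<longlonglongrightarrow> (\<integral>x. F x powr p - G x powr p \<partial>lebesgue)"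
    proof (rule integral_dominated_convergence[where w = "\<lambda>x. \<bar>F x powr p - G x powr p\<bar>"])
      show "(\<lambda>x. F x powr p - G x powr p) \<in> borel_measurable lebesgue" using Fm Gm by measurable
      show "(\<lambda>x. min (F x powr p) (real n) - min (G x powr p) (real n)) \<in> borel_measurable lebesgue" for n
        using Fm Gm by measurable
      show "integrable lebesgue (\<lambda>x. \<bar>F x powr p - G x powr p\<bar>)" using idiff by (rule integrable_abs)
      show "AE x in lebesgue. (\<lambda>n. min (F x powr p) (real n) - min (G x powr p) (real n)) \<longlonglongrightarrow> F x powr p - G x powr p"
      proof (intro AE_I2)
        fix x
        obtain n0 :: nat where n0: "max (F x powr p) (G x powr p) \<le> real n0" using real_arch_simple by blast
        have "eventually (\<lambda>n. min (F x powr p) (real n) - min (G x powr p) (real n) = F x powr p - G x powr p) sequentially"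
        proof (rule eventually_sequentiallyI[of n0])
          fix n assume "n0 \<le> n"
          then have "real n0 \<le> real n" by simp
          then show "min (F x powr p) (real n) - min (G x powr p) (real n) = F x powr p - G x powr p"
            using n0 by simp
        qed
        then show "(\<lambda>n. min (F x powr p) (real n) - min (G x powr p) (real n)) \<longlonglongrightarrow> F x powr p - G x powr p"
          by (rule tendsto_eventually)
      qed
      show "AE x in lebesgue. norm (min (F x powr p) (real n) - min (G x powr p) (real n)) \<le> \<bar>F x powr p - G x powr p\<bar>" for n
        by (intro AE_I2) (auto simp: min_def)
    qed
    obtain n1 :: nat where n1: "c2 powr p \<le> real n1" using real_arch_simple by blast
    have "\<epsilon> * c2 powr p - c1 powr (p - p0) * KG \<le> (\<integral>x. F x powr p - G x powr p \<partial>lebesgue)"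
    proof (rule LIMSEQ_le_const[OF lim], intro exI[of _ n1] allI impI)
      fix n assume "n1 \<le> n"
      then have N: "c2 powr p \<le> real n" using n1 by (meson of_nat_le_iff order_trans)
      have i1: "integrable lebesgue (\<lambda>x. min (F x powr p) (real n))"
        by (rule KB(1)[OF pP(1) _ N]) simp
      have i2: "integrable lebesgue (\<lambda>x. min (G x powr p) (real n))"
        by (rule KB(2)[OF pP(1) _ N]) simp
      show "\<epsilon> * c2 powr p - c1 powr (p - p0) * KG \<le> (\<integral>x. min (F x powr p) (real n) - min (G x powr p) (real n) \<partial>lebesgue)"
        using kb[OF pP(1) N] i1 i2 by (simp add: Bochner_Integration.integral_diff)
    qed
    moreover have "(LINT t:{0<..}|lebesgue. \<bar>f t\<bar> powr p - \<bar>g t\<bar> powr p) = (\<integral>x. F x powr p - G x powr p \<partial>lebesgue)"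
      unfolding set_lebesgue_integral_def diffeq ..
    ultimately show "(LINT t:{0<..}|lebesgue. \<bar>f t\<bar> powr p - \<bar>g t\<bar> powr p) > 0"
      using pos[OF pP] by simp
  qed
qed


end
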